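(* Let $\lambda\in\mathbb N$ be fixed and $p=\frac{\lambda+1}{\lambda}$. For every rational $\alpha\in(0,1]$, every profile $P$, every ranking $r$ that the $p$-geometric rule may output on $P$ (under any tie-breaking), and every group $N'$ that is $(\alpha,\lambda)$-significant in $P$, we have $\mathrm{avg}(N',r_{\le k})\ge\lambda$ where $k=\lceil\frac{e(\lambda+1)}{\alpha}\rceil$.
   Context: Let $N=[n]$ be a finite set of voters and $A$ a finite set of $m$ alternatives; a profile $P=(A_1,\dots,A_n)$ gives each voter $i$ a non-empty approval set $A_i\subseteq A$. A ranking $r=(r_1,\dots,r_m)$ is a linear order of $A$, $r_{\le k}=\{r_1,\dots,r_k\}$, with $r_{\le k}=A$ for $k\ge m$. For nonempty $N'\subseteq N$ and $S\subseteq A$, $\mathrm{avg}(N',S)=\frac1{|N'|}\sum_{i\in N'}|A_i\cap S|$. The cohesiveness of $N'$ is $\lambda(N')=|\bigcap_{i\in N'}A_i|$; $N'$ is $(\alpha,\lambda)$-significant in $P$ if $|N'|=\lceil\alpha n\rceil$ and $\lambda(N')\ge\lambda$. For a weight vector $\mathbf w=(w_1,w_2,\dots)$ of nonnegative reals and $S\subseteq A$, let $w(S)=\sum_{i\in N}\sum_{j=1}^{|A_i\cap S|}w_j$. The rule $\mathbf w$-RAV builds $r$ iteratively from the empty ranking: at step $k\in[m]$ it appends an unranked alternative $a$ maximizing $w(r_{\le k-1}\cup\{a\})-w(r_{\le k-1})$ (ties broken arbitrarily). The $p$-geometric rule ($p>1$) is $\mathbf w$-RAV with $\mathbf w=(\frac1p,\frac1{p^2},\frac1{p^3},\dots)$.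 $e$ is Euler's number. *)

theory Defs
  imports Complex_Main
begin

definition is_profile :: "nat \<Rightarrow> 'a set \<Rightarrow> (nat \<Rightarrow> 'a set) \<Rightarrow> bool" where
  "is_profile n Alts P \<longleftrightarrow> (\<forall>i<n. P i \<noteq> {} \<and> P i \<subseteq> Alts)"

text \<open>A ranking is a list enumerating all alternatives exactly once; r_{<=k} = set (take k r).\<close>
definition is_ranking :: "'a set \<Rightarrow> 'a list \<Rightarrow> bool" where
  "is_ranking Alts r \<longleftrightarrow> distinct r \<and> set r = Alts"

definition prefix_set :: "'a list \<Rightarrow> nat \<Rightarrow> 'a set" where
  "prefix_set r k = set (take k r)"

definition avg :: "(nat \<Rightarrow> 'a set) \<Rightarrow> nat set \<Rightarrow> 'a set \<Rightarrow> real" where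
  "avg P N' S = (\<Sum>i\<in>N'. real (card (P i \<inter> S))) / real (card N')"

definition cohesiveness :: "(nat \<Rightarrow> 'a set) \<Rightarrow> nat set \<Rightarrow> nat" where
  "cohesiveness P N' = card (\<Inter>i\<in>N'. P i)"

definition significant :: "nat \<Rightarrow> (nat \<Rightarrow> 'a set) \<Rightarrow> real \<Rightarrow> nat \<Rightarrow> nat set \<Rightarrow> bool" where
  "significant n P \<alpha> l N' \<longleftrightarrow>
     N' \<subseteq> {..<n} \<and> card N' = nat \<lceil>\<alpha> * real n\<rceil> \<and> cohesiveness P N' \<ge> l"

text \<open>Weight vector w = (w 1, w 2, ...), indexed from 1.\<close>
definition wscore :: "(nat \<Rightarrow> real) \<Rightarrow> nat \<Rightarrow> (nat \<Rightarrow> 'a set) \<Rightarrow> 'a set \<Rightarrow> real" where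
  "wscore w n P S = (\<Sum>i<n. \<Sum>j=1..card (P i \<inter> S). w j)"

text \<open>r is a possible output of w-RAV (for some tie-breaking): each step picks a
  maximizer of the marginal gain among unranked alternatives.\<close>
definition rav_output :: "(nat \<Rightarrow> real) \<Rightarrow> nat \<Rightarrow> 'a set \<Rightarrow> (nat \<Rightarrow> 'a set) \<Rightarrow> 'a list \<Rightarrow> bool" where
  "rav_output w n Alts P r \<longleftrightarrow> is_ranking Alts r \<and>
     (\<forall>k < length r. \<forall>b \<in> Alts - set (take k r).
        wscore w n P (set (take k r) \<union> {b}) - wscore w n P (set (take k r))
        \<le> wscore w n P (set (take k r) \<union> {r ! k}) - wscore w n P (set (take k r)))"

definition geometric_weights :: "real \<Rightarrow> nat \<Rightarrow> real" where
  "geometric_weights p j = 1 / p ^ j"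

end

theory Submission
  imports Defs
begin

lemma geo_sum:
  fixes l :: nat assumes "l \<ge> 1"
  shows "(\<Sum>j=1..x. (real l/(real l+1))^j) = real l * (1 - (real l/(real l+1))^x)"
proof (induction x)
  case 0 then show ?case by simp
next
  case (Suc x)
  have "(\<Sum>j=1..Suc x. (real l/(real l+1))^j) = real l * (1 - (real l/(real l+1))^x) + (real l/(real l+1))^Suc x"
    using Suc by simp
  also have "\<dots> = real l * (1 - (real l/(real l+1))^Suc x)"
  proof -
    define q where "q = real l/(real l+1)"
    have hq: "q * (real l + 1) = real l" unfolding q_def by simp
    have "real l * (1 - q^x) + q^Suc x = real l * (1 - q^Suc x)"
    proof -
      have "q^Suc x + real l * q^Suc x = q^x * (q * (real l + 1))" by (simp add: algebra_simps)
      also have "\<dots> = real l * q^x" using hq by simp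
      finally show ?thesis by (simp add: algebra_simps)
    qed
    then show ?thesis unfolding q_def .
  qed
  finally show ?case .
qed

lemma card_ins:
  assumes "finite T" "a \<notin> S"
  shows "card (T \<inter> (S \<union> {a})) = (if a \<in> T then Suc (card (T \<inter> S)) else card (T \<inter> S))"
proof (cases "a \<in> T")
  case True
  then have "T \<inter> (S \<union> {a}) = insert a (T \<inter> S)" by auto
  then show ?thesis using True assms by simp
next
  case False
  then have "T \<inter> (S \<union> {a}) = T \<inter> S" by auto
  then show ?thesis using False by simp
qed

lemma gain:
  assumes "\<forall>i<n. finite (P i)" "a \<notin> S"
  shows "wscore w n P (S \<union> {a}) - wscore w n P S
     = (\<Sum>i<n. if a \<in> P i then w (card (P i \<inter> S) + 1) else 0)"
proof -
  have "\<forall>i<n. (\<Sum>j=1..card (P i \<inter> (S\<union>{a})). w j) - (\<Sum>j=1..card (P i \<inter> S). w j)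
     = (if a \<in> P i then w (card (P i \<inter> S) + 1) else 0)"
    using card_ins assms by auto
  then show ?thesis unfolding wscore_def sum_subtractf[symmetric]
    by (intro sum.cong) auto
qed

lemma tele:
  assumes "k \<le> length r"
  shows "wscore w n P (set (take k r))
     = (\<Sum>t<k. wscore w n P (set (take t r) \<union> {r!t}) - wscore w n P (set (take t r)))"
  using assms
proof (induction k)
  case 0 then show ?case by (simp add: wscore_def)
next
  case (Suc k)
  then have "set (take (Suc k) r) = set (take k r) \<union> {r!k}"
    by (simp add: take_Suc_conv_app_nth)
  then show ?case using Suc by simp
qed

lemma tangent:
  fixes q :: real assumes "0 < q"
  shows "q^(y+1) \<ge> q^(l+1) * (1 + (real y - real l) * ln q)"
proof -
  have e: "\<And>m. q^m = exp (real m * ln q)"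
    using assms by (metis exp_ln ln_realpow zero_less_power)
  have "q^(y+1) = q^(l+1) * exp ((real y - real l) * ln q)"
    unfolding e by (simp add: exp_add[symmetric] algebra_simps)
  moreover have "1 + (real y - real l) * ln q \<le> exp ((real y - real l) * ln q)"
    by (rule exp_ge_add_one_self)
  ultimately show ?thesis using assms by (simp add: mult_left_mono)
qed

lemma e_bound:
  fixes l :: nat assumes "l \<ge> 1"
  shows "((real l + 1)/real l)^l \<le> exp 1"
proof -
  have "(real l + 1)/real l = 1 + 1/real l" using assms by (simp add: field_simps)
  also have "\<dots> \<le> exp (1/real l)" by (rule exp_ge_add_one_self)
  finally have "((real l + 1)/real l)^l \<le> exp (1/real l)^l"
    by (intro power_mono) auto
  also have "\<dots> = exp 1" using assms by (simp add: exp_of_nat_mult[symmetric])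
  finally show ?thesis .
qed

theorem corollary1:
  fixes l n :: nat and Alts :: "'a set" and P :: "nat \<Rightarrow> 'a set"
    and r :: "'a list" and N' :: "nat set" and \<alpha> :: real
  assumes "l \<ge> 1"
    and "n \<ge> 1"
    and "finite Alts"
    and "is_profile n Alts P"
    and "\<alpha> \<in> \<rat>" and "0 < \<alpha>" and "\<alpha> \<le> 1"
    and "rav_output (geometric_weights ((real l + 1) / real l)) n Alts P r"
    and "significant n P \<alpha> l N'"
  shows "avg P N' (prefix_set r (nat \<lceil>exp 1 * (real l + 1) / \<alpha>\<rceil>)) \<ge> real l"
proof (rule ccontr)
  assume neg: "\<not> ?thesis"
  define q where "q = real l/(real l+1)"
  define w where "w = geometric_weights ((real l + 1)/real l)"
  have w_eq: "w = (\<lambda>j. q^j)" unfolding w_def q_def geometric_weights_def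
    by (auto simp: power_divide)
  have q0: "0 < q" "q < 1" "q \<le> 1" using assms(1) unfolding q_def by auto
  define k where "k = nat \<lceil>exp 1 * (real l + 1) / \<alpha>\<rceil>"
  define S where "S = (\<lambda>t. set (take t r))"
  define C where "C = (\<Inter>i\<in>N'. P i)"
  have N'sub: "N' \<subseteq> {..<n}" and cardN: "card N' = nat \<lceil>\<alpha> * real n\<rceil>" and coh: "l \<le> card C"
    using assms(9) unfolding significant_def cohesiveness_def C_def by auto
  define s where "s = card N'"
  have an: "\<alpha> * real n > 0" using assms(2,6) by simp
  have s_ge: "real s \<ge> \<alpha> * real n" unfolding s_def cardN using an
    by (metis le_of_int_ceiling less_le_not_le of_int_0_less_iff of_nat_nat zero_less_ceiling)
  have spos: "s > 0" using s_ge an by linarith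
  have finN: "finite N'" using N'sub finite_subset by blast
  have Nne: "N' \<noteq> {}" using spos unfolding s_def by auto
  have Psub: "\<forall>i<n. P i \<subseteq> Alts" using assms(4) unfolding is_profile_def by auto
  have Pfin: "\<forall>i<n. finite (P i)" using Psub assms(3) finite_subset by blast
  have CP: "\<forall>i\<in>N'. C \<subseteq> P i" unfolding C_def by auto
  have CA: "C \<subseteq> Alts" using CP Nne N'sub Psub by blast
  have avgk: "avg P N' (S k) < real l" using neg unfolding prefix_set_def S_def k_def by simp
  define y where "y = (\<lambda>i. card (P i \<inter> S k))"
  have sumy: "(\<Sum>i\<in>N'. real (y i)) < real s * real l"
    using avgk spos unfolding avg_def y_def s_def by (simp add: divide_less_eq mult.commute)
  have notC: "\<forall>t\<le>k. \<not> C \<subseteq> S t"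
  proof (intro allI impI notI)
    fix t assume "t \<le> k" "C \<subseteq> S t"
    have "S t \<subseteq> S k" unfolding S_def by (rule set_take_subset_set_take) fact
    with \<open>C \<subseteq> S t\<close> have "C \<subseteq> S k" by (rule subset_trans)
    then have "\<forall>i\<in>N'. real l \<le> real (y i)"
    proof (intro ballI)
      fix i assume i: "i \<in> N'"
      then have "C \<subseteq> P i \<inter> S k" using CP \<open>C \<subseteq> S k\<close> by auto
      moreover have "finite (P i \<inter> S k)" using Pfin i N'sub by auto
      ultimately have "card C \<le> y i" unfolding y_def by (meson card_mono)
      then have "l \<le> y i" using coh by (rule le_trans[rotated])
      then show "real l \<le> real (y i)" by (rule of_nat_mono)
    qed
    then have "(\<Sum>i\<in>N'. real l) \<le> (\<Sum>i\<in>N'. real (y i))" by (intro sum_mono) auto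
    then show False using sumy unfolding s_def by simp
  qed
  have klen: "k < length r"
  proof (rule ccontr)
    assume "\<not> k < length r"
    then have "S k = Alts" unfolding S_def using assms(8) unfolding rav_output_def is_ranking_def
      by simp
    then show False using notC CA by auto
  qed
  define G where "G = (\<Sum>i\<in>N'. q^(y i + 1))"
  have step: "\<forall>t<k. G \<le> wscore w n P (S t \<union> {r!t}) - wscore w n P (S t)"
  proof (intro allI impI)
    fix t assume tk: "t < k"
    obtain a where a: "a \<in> C" "a \<notin> S t" using notC tk by (meson less_imp_le subsetI)
    have aA: "a \<in> Alts" using a CA by auto
    have rav: "wscore w n P (S t \<union> {a}) - wscore w n P (S t)
        \<le> wscore w n P (S t \<union> {r!t}) - wscore w n P (S t)"
      using assms(8) tk klen aA a unfolding rav_output_def w_def S_def by auto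
    have "G \<le> (\<Sum>i\<in>N'. q^(card (P i \<inter> S t) + 1))"
      unfolding G_def
    proof (intro sum_mono power_decreasing)
      fix i assume i: "i \<in> N'"
      have "S t \<subseteq> S k" unfolding S_def using tk set_take_subset_set_take by (metis less_imp_le)
      moreover have "finite (P i \<inter> S k)" using Pfin i N'sub by auto
      ultimately show "card (P i \<inter> S t) + 1 \<le> y i + 1" unfolding y_def
        by (meson add_right_mono card_mono Int_mono order_refl)
    qed (use q0 in auto)
    also have "\<dots> = (\<Sum>i\<in>N'. if a \<in> P i then q^(card (P i \<inter> S t) + 1) else 0)"
      using CP a by (intro sum.cong) auto
    also have "\<dots> \<le> (\<Sum>i<n. if a \<in> P i then q^(card (P i \<inter> S t) + 1) else 0)"
      using N'sub q0 by (intro sum_mono2) auto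
    also have "\<dots> = wscore w n P (S t \<union> {a}) - wscore w n P (S t)"
      using gain[OF Pfin a(2), of w, unfolded w_eq] unfolding w_eq by simp
    finally show "G \<le> wscore w n P (S t \<union> {r!t}) - wscore w n P (S t)" using rav by linarith
  qed
  have kG: "real k * G \<le> wscore w n P (S k)"
  proof -
    have "real k * G = (\<Sum>t<k. G)" by simp
    also have "\<dots> \<le> (\<Sum>t<k. wscore w n P (S t \<union> {r!t}) - wscore w n P (S t))"
      using step by (intro sum_mono) auto
    also have "\<dots> = wscore w n P (S k)" unfolding S_def using tele[of k r] klen by simp
    finally show ?thesis .
  qed
  have wub: "wscore w n P (S k) < real n * real l"
  proof -
    have "wscore w n P (S k) = (\<Sum>i<n. real l * (1 - q^card (P i \<inter> S k)))"
      unfolding wscore_def w_eq q_def using geo_sum[OF assms(1)] by simp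
    also have "\<dots> < (\<Sum>i<n. real l)"
      using assms(1,2) q0 by (intro sum_strict_mono) (auto simp: lessThan_empty_iff)
    finally show ?thesis by simp
  qed
  have Gge: "G \<ge> real s * q^(l+1)"
  proof -
    define X where "X = ln q * ((\<Sum>i\<in>N'. real (y i)) - real s * real l)"
    have A1: "(\<Sum>i\<in>N'. q^(l+1) * (1 + (real (y i) - real l) * ln q)) \<le> G"
      unfolding G_def using tangent[OF q0(1)] by (intro sum_mono) auto
    have A2: "(\<Sum>i\<in>N'. q^(l+1) * (1 + (real (y i) - real l) * ln q))
        = q^(l+1) * (real s + X)"
    proof -
      have "(\<Sum>i\<in>N'. q^(l+1) * (1 + (real (y i) - real l) * ln q))
          = q^(l+1) * (\<Sum>i\<in>N'. 1 + (real (y i) - real l) * ln q)" by (simp add: sum_distrib_left)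
      also have "(\<Sum>i\<in>N'. 1 + (real (y i) - real l) * ln q) = real s + (\<Sum>i\<in>N'. real (y i) - real l) * ln q"
        unfolding s_def by (simp add: sum.distrib sum_distrib_right)
      also have "(\<Sum>i\<in>N'. real (y i) - real l) = (\<Sum>i\<in>N'. real (y i)) - real s * real l"
        unfolding s_def by (simp add: sum_subtractf)
      finally show ?thesis unfolding X_def by (simp add: algebra_simps)
    qed
    have X0: "X \<ge> 0" unfolding X_def
      using q0 sumy by (intro mult_nonpos_nonpos) auto
    have "q^(l+1) * real s \<le> q^(l+1) * (real s + X)"
      using X0 q0 by (intro mult_left_mono) auto
    then show ?thesis using A1 A2 by (simp add: mult.commute)
  qed
  have kge: "real k \<ge> exp 1 * (real l + 1) / \<alpha>" unfolding k_def by linarith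
  have c0: "exp 1 * (real l + 1) / \<alpha> \<ge> 0" using assms(6) by simp
  have "exp 1 * (real l + 1) / \<alpha> * (\<alpha> * real n) \<le> real k * real s"
    using kge s_ge c0 an by (intro mult_mono) auto
  then have "exp 1 * (real l + 1) / \<alpha> * (\<alpha> * real n) * q^(l+1) \<le> real k * real s * q^(l+1)"
    using q0 by (intro mult_right_mono) auto
  moreover have "exp 1 * (real l + 1) / \<alpha> * (\<alpha> * real n) * q^(l+1) = exp 1 * (real l + 1) * real n * q^(l+1)"
    using assms(6) by simp
  moreover have "real k * real s * q^(l+1) \<le> real k * G"
    using Gge by (simp add: mult.assoc mult_left_mono)
  ultimately have "exp 1 * (real l + 1) * real n * q^(l+1) < real n * real l"
    using kG wub by linarith
  moreover have "(real l + 1) * q^(l+1) = real l * q^l"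
  proof -
    have "(real l + 1) * q = real l" unfolding q_def by simp
    moreover have "(real l + 1) * q^(l+1) = ((real l + 1) * q) * q^l" by (simp add: power_Suc)
    ultimately show ?thesis by simp
  qed
  ultimately have "exp 1 * q^l * (real l * real n) < 1 * (real l * real n)"
  proof -
    assume h1: "exp 1 * (real l + 1) * real n * q^(l+1) < real n * real l"
      and h2: "(real l + 1) * q^(l+1) = real l * q^l"
    have "exp 1 * (real l + 1) * real n * q^(l+1) = exp 1 * real n * ((real l + 1) * q^(l+1))"
      by (simp only: mult_ac)
    also have "\<dots> = exp 1 * real n * (real l * q^l)" by (simp only: h2)
    also have "\<dots> = exp 1 * q^l * (real l * real n)" by (simp only: mult_ac)
    finally have eqA: "exp 1 * (real l + 1) * real n * q^(l+1) = exp 1 * q^l * (real l * real n)" .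
    have e2: "real n * real l = 1 * (real l * real n)" by simp
    show ?thesis using h1[unfolded eqA e2] .
  qed
  then have lt: "exp 1 * q^l < 1" using assms(1,2) by (simp add: mult_less_cancel_right)
  have "q^l * ((real l + 1)/real l)^l = 1" unfolding q_def
    by (simp add: power_mult_distrib[symmetric] assms)
  then have "1 \<le> q^l * exp 1" using e_bound[OF assms(1)] q0
    by (metis mult_left_mono zero_le_power less_imp_le)
  then show False using lt by (simp add: mult.commute)
qed

end
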